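(* Let $t$ be a well-formed tree over $\tilde A_{i,k}$, $\Sigma$ a winning strategy of $P$ in $\mathcal G(t)$, $u\in\Sigma$, and $j$ a $P$-losing number. Then $$s(u,\Sigma){\upharpoonright}j=\sup_{w\in\mathrm{act}_u(\Sigma,j)}\big(s(w,\Sigma){\upharpoonright}j\big)=\sup_{w\in\mathrm{act}_u(\Sigma,j)}\big(s(\varepsilon,\Sigma{\upharpoonright}w){\upharpoonright}j\big),$$ where the empty supremum is the all-zero tuple.
   Context: Fix natural numbers $i<k$. Trees over a ranked alphabet are partial maps $t:\omega^*\to A$ with non-empty prefix-closed domain where a node with an $m$-ary label has exactly the children $u0,\ldots,u(m-1)$; $t{\upharpoonright}u$ is the subtree at $u$, $\preceq$ the prefix order. The alphabet $\tilde A_{i,k}$ has unary letters $p_i,\ldots,p_k$, a unary letter $\sim$, and binary letters $c_1,c_2$. Players $1,2$; $\bar P$ the opponent. Well-formed: no branch has infinitely many $\sim$. A node $u$ is switched if an odd number of strict prefixes $w\prec u$ have $t(w)=\sim$, kept otherwise. The game $\mathcal G(t)$: positions are nodes, moves to children, start at the root; $u$ is controlled by $P$ iff ($u$ kept and $t(u)=c_P$) or ($u$ switched and $t(u)=c_{\bar P}$). An infinite play is won by player 1 iff it is (eventually) kept and the least $j$ with infinitely many nodes labelled $p_j$ is even, or (eventually) switched and this $j$ is odd (take $j=k$ if none occurs infinitely often). A strategy of $P$ is a set $\Sigma\subseteq\mathrm{dom}(t)$ containing the root, prefix-closed, where each $u\in\Sigma$ controlled by $P$ has exactly one child in $\Sigma$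 and every other $u\in\Sigma$ has all children in $\Sigma$; winning if every branch all of whose prefixes lie in $\Sigma$ is won by $P$. For $u\in\Sigma$, $\Sigma{\upharpoonright}u=\{w: uw\in\Sigma\}$; when no strict prefix of $u$ is labelled $\sim$ it is a winning strategy of $P$ in $\mathcal G(t{\upharpoonright}u)$, and $s(\cdot,\Sigma{\upharpoonright}u)$ is computed with respect to the tree $t{\upharpoonright}u$. $P$-losing numbers: $j\in\{i,\ldots,k\}$ odd for $P=1$, even for $P=2$; $i',k'$ least/largest. Tuples $(\theta_{i'},\theta_{i'+2},\ldots,\theta_{k'})$ of countable ordinals are ordered lexicographically (smaller index more significant), suprema in this order; for a $P$-losing $j$, $(\theta_{i'},\ldots,\theta_{k'}){\upharpoonright}j=(\theta_{i'},\ldots,\theta_j)$. A node $u\in\Sigma$ is active if $t(u)=p_j$ for a $P$-losing $j$ and no strict prefix $w\prec u$ has $t(w)=\sim$ or $t(w)=p_{j'}$ with $j'<j$; $\mathrm{act}(\Sigma)$ is the set of active nodes, and $\mathrm{act}_u(\Sigma,j)=\{w\in\mathrm{act}(\Sigma): u\preceq w,\ t(w)=p_{j''}\text{ with }j''\le j\}$. $u\gg w$ iff $u,w\in\Sigma$, $u\prec w$ and some $w'\in\mathrm{act}(\Sigma)$ has $u\preceq w'\preceq w$ (well-founded for winning $\Sigma$). $\mathrm{succ}_u(\Sigma)$ is the set of $\preceq$-minimal elements of $\{w\in\mathrm{act}(\Sigma):u\preceq w\}$. The map $s(\cdot,\Sigma)$ is defined by well-founded recursion along $\gg$: (a) if $u\in\mathrm{act}(\Sigma)$,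 $t(u)=p_j$ and $s(u0,\Sigma)=(\theta_{i'},\ldots,\theta_{k'})$, then $s(u,\Sigma)=(\theta_{i'},\ldots,\theta_{j-2},\theta_j+1,0,\ldots,0)$; (b) if $u\notin\mathrm{act}(\Sigma)$, then $s(u,\Sigma)=\sup_{w\in\mathrm{succ}_u(\Sigma)}s(w,\Sigma)$ (empty supremum $=(0,\ldots,0)$). *)

theory Defs
  imports Main "HOL-Library.Countable_Set" "HOL-Library.Sublist"
begin

datatype sym = Pr nat | Sw | C1 | C2
  \<comment> \<open>Pr j = p_j (unary), Sw = the switch letter (unary), C1, C2 binary\<close>

datatype player = Pl1 | Pl2

fun opp :: "player \<Rightarrow> player" where
  "opp Pl1 = Pl2" | "opp Pl2 = Pl1"

fun cP :: "player \<Rightarrow> sym" where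
  "cP Pl1 = C1" | "cP Pl2 = C2"

fun arity :: "sym \<Rightarrow> nat" where
  "arity (Pr _) = 1" | "arity Sw = 1" | "arity C1 = 2" | "arity C2 = 2"

definition alph :: "nat \<Rightarrow> nat \<Rightarrow> sym set" where
  "alph i k = {Pr j | j. i \<le> j \<and> j \<le> k} \<union> {Sw, C1, C2}"

type_synonym tree = "nat list \<Rightarrow> sym option"

definition is_tree :: "nat \<Rightarrow> nat \<Rightarrow> tree \<Rightarrow> bool" where
  "is_tree i k t \<longleftrightarrow> t [] \<noteq> None
     \<and> (\<forall>u v. t (u @ v) \<noteq> None \<longrightarrow> t u \<noteq> None)
     \<and> (\<forall>u a. t u = Some a \<longrightarrow> a \<in> alph i k \<and> (\<forall>n. t (u @ [n]) \<noteq> None \<longleftrightarrow> n < arity a))"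

definition subtree :: "tree \<Rightarrow> nat list \<Rightarrow> tree" where
  "subtree t u = (\<lambda>w. t (u @ w))"

definition node :: "(nat \<Rightarrow> nat) \<Rightarrow> nat \<Rightarrow> nat list" where
  "node \<pi> n = map \<pi> [0..<n]"

definition branch :: "tree \<Rightarrow> (nat \<Rightarrow> nat) \<Rightarrow> bool" where
  "branch t \<pi> \<longleftrightarrow> (\<forall>n. t (node \<pi> n) \<noteq> None)"

definition well_formed :: "tree \<Rightarrow> bool" where
  "well_formed t \<longleftrightarrow> (\<forall>\<pi>. branch t \<pi> \<longrightarrow> finite {n. t (node \<pi> n) = Some Sw})"

definition switched :: "tree \<Rightarrow> nat list \<Rightarrow> bool" where
  "switched t u \<longleftrightarrow> odd (card {w. strict_prefix w u \<and> t w = Some Sw})"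

definition controlled :: "tree \<Rightarrow> player \<Rightarrow> nat list \<Rightarrow> bool" where
  "controlled t P u \<longleftrightarrow> (\<not> switched t u \<and> t u = Some (cP P)) \<or> (switched t u \<and> t u = Some (cP (opp P)))"

definition inf_label :: "tree \<Rightarrow> (nat \<Rightarrow> nat) \<Rightarrow> nat \<Rightarrow> bool" where
  "inf_label t \<pi> j \<longleftrightarrow> infinite {n. t (node \<pi> n) = Some (Pr j)}"

definition jmin :: "nat \<Rightarrow> tree \<Rightarrow> (nat \<Rightarrow> nat) \<Rightarrow> nat" where
  "jmin k t \<pi> = (if \<exists>j. inf_label t \<pi> j then (LEAST j. inf_label t \<pi> j) else k)"

definition won1 :: "nat \<Rightarrow> tree \<Rightarrow> (nat \<Rightarrow> nat) \<Rightarrow> bool" where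
  "won1 k t \<pi> \<longleftrightarrow>
     ((\<exists>N. \<forall>n\<ge>N. \<not> switched t (node \<pi> n)) \<and> even (jmin k t \<pi>))
   \<or> ((\<exists>N. \<forall>n\<ge>N. switched t (node \<pi> n)) \<and> odd (jmin k t \<pi>))"

definition wins :: "nat \<Rightarrow> tree \<Rightarrow> player \<Rightarrow> (nat \<Rightarrow> nat) \<Rightarrow> bool" where
  "wins k t P \<pi> \<longleftrightarrow> (if P = Pl1 then won1 k t \<pi> else \<not> won1 k t \<pi>)"

definition strategy :: "tree \<Rightarrow> player \<Rightarrow> nat list set \<Rightarrow> bool" where
  "strategy t P S \<longleftrightarrow> [] \<in> S \<and> (\<forall>u\<in>S. t u \<noteq> None)
     \<and> (\<forall>u v. u @ v \<in> S \<longrightarrow> u \<in> S)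
     \<and> (\<forall>u\<in>S. (controlled t P u \<longrightarrow> (\<exists>!n. u @ [n] \<in> S))
             \<and> (\<not> controlled t P u \<longrightarrow> (\<forall>n. t (u @ [n]) \<noteq> None \<longrightarrow> u @ [n] \<in> S)))"

definition winning_strategy :: "nat \<Rightarrow> tree \<Rightarrow> player \<Rightarrow> nat list set \<Rightarrow> bool" where
  "winning_strategy k t P S \<longleftrightarrow> strategy t P S
     \<and> (\<forall>\<pi>. (\<forall>n. node \<pi> n \<in> S) \<longrightarrow> wins k t P \<pi>)"

definition substrat :: "nat list set \<Rightarrow> nat list \<Rightarrow> nat list set" where
  "substrat S u = {w. u @ w \<in> S}"

text \<open>Countable ordinals are modelled by an arbitrary well-order in which every
 countable set has a strict upper bound (e.g. omega_1).\<close>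
definition countably_bounded :: "'o::wellorder itself \<Rightarrow> bool" where
  "countably_bounded _ \<longleftrightarrow> (\<forall>A::'o set. countable A \<longrightarrow> (\<exists>b. \<forall>a\<in>A. a < b))"

definition ozero :: "'o::wellorder" where
  "ozero = (LEAST x. True)"

definition osuc :: "'o::wellorder \<Rightarrow> 'o" where
  "osuc a = (LEAST b. a < b)"

definition losing :: "nat \<Rightarrow> nat \<Rightarrow> player \<Rightarrow> nat \<Rightarrow> bool" where
  "losing i k P j \<longleftrightarrow> i \<le> j \<and> j \<le> k \<and> (if P = Pl1 then odd j else even j)"

definition Lset :: "nat \<Rightarrow> nat \<Rightarrow> player \<Rightarrow> nat set" where
  "Lset i k P = {j. losing i k P j}"

text \<open>A tuple indexed by the finite index set L is represented by a function
 nat => 'o which is ozero outside L. Smaller indices are more significant.\<close>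
definition lexless :: "nat set \<Rightarrow> (nat \<Rightarrow> 'o::wellorder) \<Rightarrow> (nat \<Rightarrow> 'o) \<Rightarrow> bool" where
  "lexless L x y \<longleftrightarrow> (\<exists>j\<in>L. x j < y j \<and> (\<forall>m\<in>L. m < j \<longrightarrow> x m = y m))"

definition lexle :: "nat set \<Rightarrow> (nat \<Rightarrow> 'o::wellorder) \<Rightarrow> (nat \<Rightarrow> 'o) \<Rightarrow> bool" where
  "lexle L x y \<longleftrightarrow> (\<forall>m\<in>L. x m = y m) \<or> lexless L x y"

definition supported :: "nat set \<Rightarrow> (nat \<Rightarrow> 'o::wellorder) \<Rightarrow> bool" where
  "supported L x \<longleftrightarrow> (\<forall>m. m \<notin> L \<longrightarrow> x m = ozero)"

text \<open>Supremum (least upper bound) in the lexicographic order on L-tuples;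
 the empty supremum is the all-zero tuple.\<close>
definition lex_sup :: "nat set \<Rightarrow> (nat \<Rightarrow> 'o::wellorder) set \<Rightarrow> (nat \<Rightarrow> 'o)" where
  "lex_sup L X = (THE y. supported L y \<and> (\<forall>x\<in>X. lexle L x y)
      \<and> (\<forall>z. supported L z \<longrightarrow> (\<forall>x\<in>X. lexle L x z) \<longrightarrow> lexle L y z))"

definition restr :: "nat \<Rightarrow> (nat \<Rightarrow> 'o::wellorder) \<Rightarrow> (nat \<Rightarrow> 'o)" where
  "restr j x = (\<lambda>m. if m \<le> j then x m else ozero)"

definition bump :: "nat \<Rightarrow> (nat \<Rightarrow> 'o::wellorder) \<Rightarrow> (nat \<Rightarrow> 'o)" where
  "bump j x = (\<lambda>m. if m < j then x m else if m = j then osuc (x j) else ozero)"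

definition act :: "nat \<Rightarrow> nat \<Rightarrow> player \<Rightarrow> tree \<Rightarrow> nat list set \<Rightarrow> nat list set" where
  "act i k P t S = {u \<in> S. \<exists>j. t u = Some (Pr j) \<and> losing i k P j
      \<and> (\<forall>w. strict_prefix w u \<longrightarrow> t w \<noteq> Some Sw \<and> (\<forall>j'. t w = Some (Pr j') \<longrightarrow> \<not> j' < j))}"

definition act_at :: "nat \<Rightarrow> nat \<Rightarrow> player \<Rightarrow> tree \<Rightarrow> nat list set \<Rightarrow> nat list \<Rightarrow> nat \<Rightarrow> nat list set" where
  "act_at i k P t S u j = {w \<in> act i k P t S. prefix u w \<and> (\<exists>j''. t w = Some (Pr j'') \<and> j'' \<le> j)}"

definition succs :: "nat \<Rightarrow> nat \<Rightarrow> player \<Rightarrow> tree \<Rightarrow> nat list set \<Rightarrow> nat list \<Rightarrow> nat list set" where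
  "succs i k P t S u = {w \<in> act i k P t S. prefix u w
      \<and> \<not> (\<exists>w'\<in>act i k P t S. prefix u w' \<and> strict_prefix w' w)}"

definition s_eqs :: "nat \<Rightarrow> nat \<Rightarrow> player \<Rightarrow> tree \<Rightarrow> nat list set \<Rightarrow> (nat list \<Rightarrow> nat \<Rightarrow> 'o::wellorder) \<Rightarrow> bool" where
  "s_eqs i k P t S f \<longleftrightarrow> (\<forall>u\<in>S.
      (u \<in> act i k P t S \<longrightarrow> (\<forall>j. t u = Some (Pr j) \<longrightarrow> f u = bump j (f (u @ [0]))))
    \<and> (u \<notin> act i k P t S \<longrightarrow> f u = lex_sup (Lset i k P) (f ` succs i k P t S u)))"

definition stup :: "nat \<Rightarrow> nat \<Rightarrow> player \<Rightarrow> tree \<Rightarrow> nat list set \<Rightarrow> nat list \<Rightarrow> nat \<Rightarrow> 'o::wellorder" where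
  "stup i k P t S = (THE f. s_eqs i k P t S f \<and> (\<forall>u. u \<notin> S \<longrightarrow> f u = (\<lambda>_. ozero)))"

end

theory Submission
  imports Defs
begin


definition is_lub :: "nat set \<Rightarrow> (nat \<Rightarrow> 'o::wellorder) set \<Rightarrow> (nat \<Rightarrow> 'o) \<Rightarrow> bool" where
  "is_lub L X y \<longleftrightarrow> supported L y \<and> (\<forall>x\<in>X. lexle L x y)
      \<and> (\<forall>z. supported L z \<longrightarrow> (\<forall>x\<in>X. lexle L x z) \<longrightarrow> lexle L y z)"

lemma lexle_cong: "\<forall>m\<in>L. x m = x' m \<Longrightarrow> \<forall>m\<in>L. y m = y' m \<Longrightarrow> lexle L x y = lexle L x' y'"
  unfolding lexle_def lexless_def by auto

lemma lexless_cong: "\<forall>m\<in>L. x m = x' m \<Longrightarrow> \<forall>m\<in>L. y m = y' m \<Longrightarrow> lexless L x y = lexless L x' y'"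
  unfolding lexless_def by auto

lemma lexle_refl: "lexle L x x" by (simp add: lexle_def)

lemma lexless_asym: "lexless L x y \<Longrightarrow> lexle L y x \<Longrightarrow> False"
proof -
  assume a: "lexless L x y" and b: "lexle L y x"
  obtain j1 where j1: "j1\<in>L" "x j1 < y j1" "\<forall>m\<in>L. m < j1 \<longrightarrow> x m = y m"
    using a unfolding lexless_def by blast
  show False
  proof (cases "\<forall>m\<in>L. y m = x m")
    case True then show False using j1 by simp
  next
    case False
    then obtain j2 where j2: "j2\<in>L" "y j2 < x j2" "\<forall>m\<in>L. m < j2 \<longrightarrow> y m = x m"
      using b unfolding lexle_def lexless_def by blast
    show False
    proof (cases j1 j2 rule: linorder_cases)
      case less then show ?thesis using j1 j2 by simp
    next
      case equal then show ?thesis using j1 j2 by simp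
    next
      case greater then show ?thesis using j1 j2 by simp
    qed
  qed
qed

lemma lexle_trans: "lexle L x y \<Longrightarrow> lexle L y z \<Longrightarrow> lexle L x z"
proof -
  assume a: "lexle L x y" and b: "lexle L y z"
  show ?thesis
  proof (cases "\<forall>m\<in>L. x m = y m")
    case True then show ?thesis using lexle_cong[of L x y z z] b by simp
  next
    case xy: False
    then obtain j1 where j1: "j1\<in>L" "x j1 < y j1" "\<forall>m\<in>L. m < j1 \<longrightarrow> x m = y m"
      using a unfolding lexle_def lexless_def by blast
    show ?thesis
    proof (cases "\<forall>m\<in>L. y m = z m")
      case True then show ?thesis using lexle_cong[of L x x y z] a by simp
    next
      case False
      then obtain j2 where j2: "j2\<in>L" "y j2 < z j2" "\<forall>m\<in>L. m < j2 \<longrightarrow> y m = z m"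
        using b unfolding lexle_def lexless_def by blast
      have "lexless L x z"
      proof (cases j1 j2 rule: linorder_cases)
        case less then show ?thesis unfolding lexless_def using j1 j2
          by (intro bexI[of _ j1]) auto
      next
        case equal then show ?thesis unfolding lexless_def using j1 j2
          by (intro bexI[of _ j1]) (auto intro: order.strict_trans)
      next
        case greater then show ?thesis unfolding lexless_def using j1 j2
          by (intro bexI[of _ j2]) auto
      qed
      then show ?thesis unfolding lexle_def by blast
    qed
  qed
qed

lemma lexle_linear: "lexle L x y \<or> lexle L y x"
proof (cases "\<forall>m\<in>L. x m = y m")
  case True then show ?thesis by (simp add: lexle_def)
next
  case False
  define j where "j = (LEAST m. m \<in> L \<and> x m \<noteq> y m)"
  have j: "j \<in> L" "x j \<noteq> y j" using False LeastI_ex[of "\<lambda>m. m \<in> L \<and> x m \<noteq> y m"] j_def by auto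
  have jm: "\<forall>m\<in>L. m < j \<longrightarrow> x m = y m" using not_less_Least j_def by blast
  show ?thesis
  proof (cases "x j < y j")
    case True then show ?thesis using j jm unfolding lexle_def lexless_def by blast
  next
    case False then have "y j < x j" using j by auto
    then show ?thesis using j jm unfolding lexle_def lexless_def
      by (intro disjI2 bexI[of _ j]) auto
  qed
qed

lemma lexle_not: "\<not> lexle L x y \<Longrightarrow> lexless L y x"
  using lexle_linear[of L x y] unfolding lexle_def by auto

lemma lexle_antisym: "lexle L x y \<Longrightarrow> lexle L y x \<Longrightarrow> \<forall>m\<in>L. x m = y m"
  using lexless_asym unfolding lexle_def by blast

lemma lexle_prefix: "lexle L x y \<Longrightarrow> lexle (L \<inter> {..j}) x y"
proof -
  assume a: "lexle L x y"
  show ?thesis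
  proof (cases "\<forall>m\<in>L. x m = y m")
    case True then show ?thesis unfolding lexle_def by simp
  next
    case False
    then obtain j1 where j1: "j1\<in>L" "x j1 < y j1" "\<forall>m\<in>L. m < j1 \<longrightarrow> x m = y m"
      using a unfolding lexle_def lexless_def by blast
    show ?thesis
    proof (cases "j1 \<le> j")
      case True then show ?thesis unfolding lexle_def lexless_def using j1
        by (intro disjI2 bexI[of _ j1]) auto
    next
      case False then show ?thesis unfolding lexle_def using j1 by auto
    qed
  qed
qed

lemma supported_eq: "supported L x \<Longrightarrow> supported L y \<Longrightarrow> \<forall>m\<in>L. x m = y m \<Longrightarrow> x = y"
proof (rule ext)
  fix m assume "supported L x" "supported L y" "\<forall>m\<in>L. x m = y m"
  then show "x m = y m" by (cases "m \<in> L") (auto simp: supported_def)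
qed

lemma is_lub_unique: "is_lub L X y \<Longrightarrow> is_lub L X y' \<Longrightarrow> y = y'"
  unfolding is_lub_def by (meson lexle_antisym supported_eq)

lemma lex_sup_eq: "is_lub L X y \<Longrightarrow> lex_sup L X = y"
  unfolding lex_sup_def
  apply (rule the_equality)
  using is_lub_unique unfolding is_lub_def by blast+

lemma ozero_least: "ozero \<le> (x::'o::wellorder)"
  unfolding ozero_def by (rule Least_le) (rule TrueI)

lemma osuc_gt: assumes "countably_bounded TYPE('o::wellorder)" shows "(a::'o) < osuc a"
proof -
  have "countable {a}" by simp
  then obtain b where "\<forall>x\<in>{a}. x < b" using assms unfolding countably_bounded_def by blast
  then have "a < b" by simp
  then show ?thesis unfolding osuc_def by (rule LeastI)
qed

lemma lexle_ins: "x a = z a \<Longrightarrow> lexle L' x z \<Longrightarrow> lexle (insert a L') x z"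
  unfolding lexle_def lexless_def
proof (elim disjE)
  assume "x a = z a" "\<exists>j\<in>L'. x j < z j \<and> (\<forall>m\<in>L'. m < j \<longrightarrow> x m = z m)"
  then obtain j where "j\<in>L'" "x j < z j" "\<forall>m\<in>L'. m < j \<longrightarrow> x m = z m" by blast
  then show "(\<forall>m\<in>insert a L'. x m = z m) \<or> (\<exists>j\<in>insert a L'. x j < z j \<and> (\<forall>m\<in>insert a L'. m < j \<longrightarrow> x m = z m))"
    using \<open>x a = z a\<close> by (intro disjI2 bexI[of _ j]) auto
qed auto

lemma lexle_del: "x a = z a \<Longrightarrow> lexle (insert a L') x z \<Longrightarrow> lexle L' x z"
  unfolding lexle_def lexless_def
proof (elim disjE)
  assume "x a = z a" "\<exists>j\<in>insert a L'. x j < z j \<and> (\<forall>m\<in>insert a L'. m < j \<longrightarrow> x m = z m)"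
  then obtain j where j: "j\<in>insert a L'" "x j < z j" "\<forall>m\<in>insert a L'. m < j \<longrightarrow> x m = z m" by blast
  then have "j \<noteq> a" using \<open>x a = z a\<close> by auto
  then have "j \<in> L'" using j by auto
  then show "(\<forall>m\<in>L'. x m = z m) \<or> (\<exists>j\<in>L'. x j < z j \<and> (\<forall>m\<in>L'. m < j \<longrightarrow> x m = z m))"
    using j by (intro disjI2 bexI[of _ j]) auto
qed auto

lemma lexle_min: assumes "a \<in> L" "\<forall>b\<in>L. b \<noteq> a \<longrightarrow> a < b" "lexle L x z" shows "x a \<le> z a"
proof (cases "\<forall>m\<in>L. x m = z m")
  case True then show ?thesis using assms by simp
next
  case False
  then obtain j where j: "j\<in>L" "x j < z j" "\<forall>m\<in>L. m < j \<longrightarrow> x m = z m"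
    using assms(3) unfolding lexle_def lexless_def by blast
  show ?thesis
  proof (cases "j = a")
    case True then show ?thesis using j by simp
  next
    case False then have "a < j" using assms j by auto
    then show ?thesis using j assms by simp
  qed
qed

lemma lexle_minI: assumes "a \<in> L" "\<forall>b\<in>L. b \<noteq> a \<longrightarrow> a < b" "x a < z a" shows "lexle L x z"
  unfolding lexle_def lexless_def using assms by (intro disjI2 bexI[of _ a]) auto

lemma lub_exists:
  assumes ords: "countably_bounded TYPE('o::wellorder)" and fin: "finite L"
  shows "countable X \<Longrightarrow> \<exists>y. is_lub L X (y::nat \<Rightarrow> 'o)"
  using fin
proof (induction L arbitrary: X rule: finite_linorder_min_induct)
  case empty
  have "is_lub {} X (\<lambda>_. ozero)" unfolding is_lub_def supported_def lexle_def by simp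
  then show ?case by blast
next
  case (insert a L')
  have "countable ((\<lambda>x. x a) ` X)" using insert.prems by simp
  then obtain b where "\<forall>y\<in>(\<lambda>x. x a) ` X. y < b" using ords unfolding countably_bounded_def by blast
  then have b: "\<forall>x\<in>X. x a < b" by blast
  define c where "c = (LEAST c. \<forall>x\<in>X. x a \<le> c)"
  have cub: "\<forall>x\<in>X. x a \<le> c" unfolding c_def by (rule LeastI[of _ b]) (use b in auto)
  have cle: "\<And>d. \<forall>x\<in>X. x a \<le> d \<Longrightarrow> c \<le> d" unfolding c_def by (rule Least_le)
  define X' where "X' = {x\<in>X. x a = c}"
  have "countable X'" using insert.prems unfolding X'_def by simp
  then obtain y' where y': "is_lub L' X' y'" using insert.IH by blast
  define y where "y = y'(a := c)"
  have aL: "a \<notin> L'" using insert.hyps by blast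
  have yL: "\<forall>m\<in>L'. y m = y' m" using aL y_def by auto
  have ins: "lexle (insert a L') x z" if "x a = z a" "lexle L' x z" for x z :: "nat \<Rightarrow> 'o"
    using that lexle_ins by blast
  have del: "lexle L' x z" if "x a = z a" "lexle (insert a L') x z" for x z :: "nat \<Rightarrow> 'o"
    using that lexle_del by blast
  have amn: "\<forall>b\<in>insert a L'. b \<noteq> a \<longrightarrow> a < b" using insert.hyps by auto
  have amin: "x a \<le> z a" if "lexle (insert a L') x z" for x z :: "nat \<Rightarrow> 'o"
    using that lexle_min[OF _ amn] by blast
  have sup: "supported (insert a L') y"
    using y' unfolding is_lub_def supported_def y_def by auto
  have ub: "\<forall>x\<in>X. lexle (insert a L') x y"
  proof
    fix x assume x: "x \<in> X"
    show "lexle (insert a L') x y"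
    proof (cases "x a < c")
      case True
      then show ?thesis using lexle_minI[OF _ amn, of x y] y_def by simp
    next
      case False
      then have "x a = c" using cub x by (meson order_le_less)
      then have "x \<in> X'" using x X'_def by blast
      then have "lexle L' x y'" using y' unfolding is_lub_def by blast
      then have "lexle L' x y" using lexle_cong[OF _ yL, of x x] by simp
      then show ?thesis using ins \<open>x a = c\<close> y_def by simp
    qed
  qed
  have least: "lexle (insert a L') y z" if zs: "supported (insert a L') z"
    and zub: "\<forall>x\<in>X. lexle (insert a L') x z" for z
  proof -
    have "c \<le> z a" using cle amin zub by blast
    show ?thesis
    proof (cases "c < z a")
      case True
      then show ?thesis using lexle_minI[OF _ amn, of y z] y_def by simp
    next
      case False
      then have cz: "c = z a" using \<open>c \<le> z a\<close> by (simp add: order_le_less)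
      define z' where "z' = z(a := ozero)"
      have z'L: "\<forall>m\<in>L'. z m = z' m" using aL z'_def by auto
      have "supported L' z'" using zs unfolding supported_def z'_def by auto
      moreover have "\<forall>x\<in>X'. lexle L' x z'"
      proof
        fix x assume "x \<in> X'"
        then have "x \<in> X" "x a = z a" using X'_def cz by auto
        then have "lexle L' x z" using del zub by blast
        then show "lexle L' x z'" using lexle_cong[OF _ z'L, of x x] by simp
      qed
      ultimately have "lexle L' y' z'" using y' unfolding is_lub_def by blast
      then have "lexle L' y z" using lexle_cong[OF yL z'L] by simp
      then show ?thesis using ins cz y_def by simp
    qed
  qed
  have "is_lub (insert a L') X y" unfolding is_lub_def using sup ub least by blast
  then show ?case by blast
qed


lemma lexless_lexle: "lexless L x y \<Longrightarrow> lexle L x y" unfolding lexle_def by blast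

lemma lub_restr:
  assumes ords: "countably_bounded TYPE('o::wellorder)" and fin: "finite L" and cX: "countable X"
    and lub: "is_lub L X (y::nat \<Rightarrow> 'o)"
  shows "is_lub (L \<inter> {..j}) X (restr j y)"
proof -
  let ?Lj = "L \<inter> {..j}"
  have rj: "\<forall>m\<in>?Lj. restr j y m = y m" unfolding restr_def by auto
  have s1: "supported ?Lj (restr j y)"
    using lub unfolding is_lub_def supported_def restr_def by auto
  have s2: "\<forall>x\<in>X. lexle ?Lj x (restr j y)"
  proof
    fix x assume "x \<in> X"
    then have "lexle L x y" using lub unfolding is_lub_def by blast
    then have "lexle ?Lj x y" by (rule lexle_prefix)
    then show "lexle ?Lj x (restr j y)" using lexle_cong[of ?Lj x x "restr j y" y] rj by simp
  qed
  have s3: "lexle ?Lj (restr j y) z" if zs: "supported ?Lj z" and zub: "\<forall>x\<in>X. lexle ?Lj x z" for z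
  proof (rule ccontr)
    assume "\<not> lexle ?Lj (restr j y) z"
    then have "lexless ?Lj z (restr j y)" by (rule lexle_not)
    then have zy: "lexless ?Lj z y" using lexless_cong[of ?Lj z z "restr j y" y] rj by simp
    let ?Lh = "L \<inter> {j<..}"
    define X'' where "X'' = {x\<in>X. \<forall>m\<in>?Lj. x m = z m}"
    have "countable X''" using cX unfolding X''_def by simp
    moreover have "finite ?Lh" using fin by simp
    ultimately obtain y'' where y'': "is_lub ?Lh X'' y''" using lub_exists[OF ords] by blast
    define z' where "z' = (\<lambda>m. if m \<le> j then z m else y'' m)"
    have z's: "supported L z'"
      using zs y'' unfolding is_lub_def supported_def z'_def by auto
    have z'ub: "\<forall>x\<in>X. lexle L x z'"
    proof
      fix x assume xX: "x \<in> X"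
      show "lexle L x z'"
      proof (cases "\<forall>m\<in>?Lj. x m = z m")
        case True
        then have "x \<in> X''" using xX X''_def by blast
        then have "lexle ?Lh x y''" using y'' unfolding is_lub_def by blast
        then show ?thesis
        proof (cases "\<forall>m\<in>?Lh. x m = y'' m")
          case True2: True
          have "\<forall>m\<in>L. x m = z' m"
          proof
            fix m assume "m \<in> L"
            then show "x m = z' m" using True True2 unfolding z'_def by (cases "m \<le> j") auto
          qed
          then show ?thesis unfolding lexle_def by blast
        next
          case False
          then obtain m1 where m1: "m1 \<in> ?Lh" "x m1 < y'' m1" "\<forall>m\<in>?Lh. m < m1 \<longrightarrow> x m = y'' m"
            using \<open>lexle ?Lh x y''\<close> unfolding lexle_def lexless_def by blast
          have "\<forall>m\<in>L. m < m1 \<longrightarrow> x m = z' m"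
          proof (intro ballI impI)
            fix m assume "m \<in> L" "m < m1"
            then show "x m = z' m" using True m1 unfolding z'_def by (cases "m \<le> j") auto
          qed
          moreover have "x m1 < z' m1" using m1 unfolding z'_def by auto
          ultimately show ?thesis using m1 unfolding lexle_def lexless_def by blast
        qed
      next
        case False
        then obtain m0 where m0: "m0 \<in> ?Lj" "x m0 < z m0" "\<forall>m\<in>?Lj. m < m0 \<longrightarrow> x m = z m"
          using zub xX unfolding lexle_def lexless_def by blast
        have "\<forall>m\<in>L. m < m0 \<longrightarrow> x m = z' m"
          using m0 unfolding z'_def by auto
        moreover have "x m0 < z' m0" using m0 unfolding z'_def by auto
        ultimately show ?thesis using m0 unfolding lexle_def lexless_def by blast
      qed
    qed
    have "lexle L y z'" using lub z's z'ub unfolding is_lub_def by blast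
    moreover have "lexless L z' y"
    proof -
      obtain m0 where m0: "m0 \<in> ?Lj" "z m0 < y m0" "\<forall>m\<in>?Lj. m < m0 \<longrightarrow> z m = y m"
        using zy unfolding lexless_def by blast
      have "\<forall>m\<in>L. m < m0 \<longrightarrow> z' m = y m" using m0 unfolding z'_def by auto
      moreover have "z' m0 < y m0" using m0 unfolding z'_def by auto
      ultimately show ?thesis using m0 unfolding lexless_def by blast
    qed
    ultimately show False using lexless_asym by blast
  qed
  show ?thesis unfolding is_lub_def using s1 s2 s3 by blast
qed

lemma lexle_bump:
  assumes ords: "countably_bounded TYPE('o::wellorder)" and "j2 \<in> L"
  shows "lexle L (x::nat \<Rightarrow> 'o) (bump j2 x)"
proof -
  have "x j2 < osuc (x j2)" by (rule osuc_gt[OF ords])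
  then show ?thesis unfolding lexle_def lexless_def bump_def using assms(2)
    by (intro disjI2 bexI[of _ j2]) auto
qed

lemma restr_bump_gt: "j < j2 \<Longrightarrow> restr j (bump j2 x) = restr j x"
  unfolding restr_def bump_def by auto

lemma supported_bump: "supported L x \<Longrightarrow> j2 \<in> L \<Longrightarrow> supported L (bump j2 x)"
  unfolding supported_def bump_def by auto

lemma supported_restr: "supported L x \<Longrightarrow> supported (L \<inter> {..j}) (restr j x)"
  unfolding supported_def restr_def by auto

lemma restr_agree: "\<forall>m\<in>L \<inter> {..j}. restr j x m = x m"
  unfolding restr_def by auto




definition Rel :: "nat \<Rightarrow> nat \<Rightarrow> player \<Rightarrow> tree \<Rightarrow> nat list set \<Rightarrow> (nat list \<times> nat list) set" where
  "Rel i k P t S = {(w,u). (u \<in> act i k P t S \<and> w = u @ [0]) \<or> (u \<notin> act i k P t S \<and> w \<in> succs i k P t S u)}"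

definition noinf :: "nat \<Rightarrow> nat \<Rightarrow> player \<Rightarrow> tree \<Rightarrow> nat list set \<Rightarrow> bool" where
  "noinf i k P t S \<longleftrightarrow> (\<forall>\<pi>. \<not> (\<forall>N. \<exists>n\<ge>N. node \<pi> n \<in> act i k P t S))"

lemma prefix_nth_agree: "prefix a z \<Longrightarrow> prefix b z \<Longrightarrow> m < length a \<Longrightarrow> m < length b \<Longrightarrow> a ! m = b ! m"
  unfolding prefix_def by (metis nth_append)

lemma chain_prefix:
  assumes "\<forall>n. strict_prefix (c n) (c (Suc n))"
  shows "n \<le> m \<Longrightarrow> prefix (c n) (c m)"
proof (induction m)
  case 0 then show ?case by simp
next
  case (Suc m)
  show ?case
  proof (cases "n \<le> m")
    case True then show ?thesis using Suc assms by (meson prefix_order.trans strict_prefix_def)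
  next
    case False then have "n = Suc m" using Suc by simp
    then show ?thesis by simp
  qed
qed

lemma chain_length:
  assumes "\<forall>n. strict_prefix (c n) (c (Suc n))"
  shows "n \<le> length (c n)"
proof (induction n)
  case 0 then show ?case by simp
next
  case (Suc n)
  have "length (c n) < length (c (Suc n))" using assms prefix_length_less by blast
  then show ?case using Suc by simp
qed

lemma chain_branch:
  assumes ch: "\<forall>n. strict_prefix (c n) (c (Suc n))"
  shows "\<exists>\<pi>. \<forall>n. node \<pi> (length (c n)) = c n"
proof -
  define \<pi> where "\<pi> m = c (Suc m) ! m" for m
  have "node \<pi> (length (c n)) = c n" for n
  proof (rule nth_equalityI)
    show "length (node \<pi> (length (c n))) = length (c n)" unfolding node_def by simp
  next
    fix m assume "m < length (node \<pi> (length (c n)))"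
    then have m: "m < length (c n)" unfolding node_def by simp
    have "Suc m \<le> length (c (Suc m))" using chain_length[OF ch] by blast
    then have m2: "m < length (c (Suc m))" by simp
    have p1: "prefix (c (Suc m)) (c (max (Suc m) n))" using chain_prefix[OF ch] by simp
    have p2: "prefix (c n) (c (max (Suc m) n))" using chain_prefix[OF ch] by simp
    have "c (Suc m) ! m = c n ! m" using prefix_nth_agree[OF p1 p2 m2 m] .
    then show "node \<pi> (length (c n)) ! m = c n ! m" using m unfolding node_def \<pi>_def by simp
  qed
  then show ?thesis by blast
qed

lemma succs_act: "w \<in> succs i k P t S u \<Longrightarrow> w \<in> act i k P t S \<and> prefix u w"
  unfolding succs_def by blast

lemma wf_Rel:
  assumes ni: "noinf i k P t S"
  shows "wf (Rel i k P t S)"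
proof -
  have "\<nexists>f. \<forall>n. (f (Suc n), f n) \<in> Rel i k P t S"
  proof
    assume "\<exists>f. \<forall>n. (f (Suc n), f n) \<in> Rel i k P t S"
    then obtain f where f: "\<forall>n. (f (Suc n), f n) \<in> Rel i k P t S" by blast
    have st: "strict_prefix (f n) (f (Suc n)) \<and> (f n \<in> act i k P t S \<or> f (Suc n) \<in> act i k P t S)" for n
    proof -
      have "(f (Suc n), f n) \<in> Rel i k P t S" using f by blast
      then have "(f n \<in> act i k P t S \<and> f (Suc n) = f n @ [0]) \<or> (f n \<notin> act i k P t S \<and> f (Suc n) \<in> succs i k P t S (f n))"
        unfolding Rel_def by blast
      then show ?thesis
      proof
        assume "f n \<in> act i k P t S \<and> f (Suc n) = f n @ [0]"
        then show ?thesis by (simp add: strict_prefix_def)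
      next
        assume a: "f n \<notin> act i k P t S \<and> f (Suc n) \<in> succs i k P t S (f n)"
        then have "f (Suc n) \<in> act i k P t S" "prefix (f n) (f (Suc n))" using succs_act by blast+
        then show ?thesis using a by (auto simp: strict_prefix_def)
      qed
    qed
    then have ch: "\<forall>n. strict_prefix (f n) (f (Suc n))" by blast
    obtain \<pi> where pi: "\<forall>n. node \<pi> (length (f n)) = f n" using chain_branch[OF ch] by blast
    have "\<forall>N. \<exists>n\<ge>N. node \<pi> n \<in> act i k P t S"
    proof
      fix N
      have l1: "N \<le> length (f N)" "N \<le> length (f (Suc N))"
        using chain_length[OF ch, of N] chain_length[OF ch, of "Suc N"] by auto
      show "\<exists>n\<ge>N. node \<pi> n \<in> act i k P t S"
        using st[of N] l1 pi by metis
    qed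
    then show False using ni unfolding noinf_def by blast
  qed
  then show ?thesis using wf_iff_no_infinite_down_chain by blast
qed

definition plab :: "tree \<Rightarrow> nat list \<Rightarrow> nat" where
  "plab t u = (case t u of Some (Pr j) \<Rightarrow> j | _ \<Rightarrow> 0)"

definition Fs :: "nat \<Rightarrow> nat \<Rightarrow> player \<Rightarrow> tree \<Rightarrow> nat list set \<Rightarrow> (nat list \<Rightarrow> nat \<Rightarrow> 'o::wellorder) \<Rightarrow> nat list \<Rightarrow> nat \<Rightarrow> 'o" where
  "Fs i k P t S g u = (if u \<notin> S then (\<lambda>_. ozero) else if u \<in> act i k P t S then bump (plab t u) (g (u @ [0]))
     else lex_sup (Lset i k P) (g ` succs i k P t S u))"

lemma stup_exists_unique:
  assumes wfR: "wf (Rel i k P t S)"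
  shows "\<exists>!f :: nat list \<Rightarrow> nat \<Rightarrow> 'o::wellorder. s_eqs i k P t S f \<and> (\<forall>u. u \<notin> S \<longrightarrow> f u = (\<lambda>_. ozero))"
proof -
  define h :: "nat list \<Rightarrow> nat \<Rightarrow> 'o" where "h = wfrec (Rel i k P t S) (Fs i k P t S)"
  have hF: "h u = Fs i k P t S h u" for u
  proof -
    have "h u = Fs i k P t S (cut h (Rel i k P t S) u) u" unfolding h_def by (rule wfrec[OF wfR])
    also have "\<dots> = Fs i k P t S h u"
    proof -
      have c1: "u \<in> act i k P t S \<Longrightarrow> cut h (Rel i k P t S) u (u @ [0]) = h (u @ [0])"
        by (rule cut_apply) (simp add: Rel_def)
      have c2: "u \<notin> act i k P t S \<Longrightarrow> (cut h (Rel i k P t S) u) ` succs i k P t S u = h ` succs i k P t S u"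
        by (rule image_cong) (auto intro: cut_apply simp: Rel_def)
      show ?thesis unfolding Fs_def using c1 c2 by simp
    qed
    finally show ?thesis .
  qed
  show ?thesis
  proof (rule ex1I[of _ h])
    show "s_eqs i k P t S h \<and> (\<forall>u. u \<notin> S \<longrightarrow> h u = (\<lambda>_. ozero))"
      unfolding s_eqs_def
    proof (intro conjI ballI allI impI)
      fix u j assume "u \<in> S" "u \<in> act i k P t S" "t u = Some (Pr j)"
      then show "h u = bump j (h (u @ [0]))" using hF[of u] unfolding Fs_def plab_def by simp
    next
      fix u assume "u \<in> S" "u \<notin> act i k P t S"
      then show "h u = lex_sup (Lset i k P) (h ` succs i k P t S u)" using hF[of u] unfolding Fs_def by simp
    next
      fix u assume "u \<notin> S"
      then show "h u = (\<lambda>_. ozero)" using hF[of u] unfolding Fs_def by simp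
    qed
  next
    fix f :: "nat list \<Rightarrow> nat \<Rightarrow> 'o"
    assume f: "s_eqs i k P t S f \<and> (\<forall>u. u \<notin> S \<longrightarrow> f u = (\<lambda>_. ozero))"
    have "f u = h u" for u
    proof (induction u rule: wf_induct_rule[OF wfR])
      case (1 u)
      show ?case
      proof (cases "u \<in> S")
        case False then show ?thesis using f hF[of u] unfolding Fs_def by simp
      next
        case uS: True
        show ?thesis
        proof (cases "u \<in> act i k P t S")
          case True
          then obtain j where j: "t u = Some (Pr j)" unfolding act_def by blast
          have "(u @ [0], u) \<in> Rel i k P t S" using True by (simp add: Rel_def)
          then have "f (u @ [0]) = h (u @ [0])" using 1 by blast
          then show ?thesis using f hF[of u] uS True j unfolding Fs_def s_eqs_def plab_def by simp
        next
          case False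
          have "\<forall>w\<in>succs i k P t S u. (w, u) \<in> Rel i k P t S" using False by (simp add: Rel_def)
          then have "f ` succs i k P t S u = h ` succs i k P t S u" using 1 by (auto intro: image_cong)
          then show ?thesis using f hF[of u] uS False unfolding Fs_def s_eqs_def by simp
        qed
      qed
    qed
    then show "f = h" by blast
  qed
qed

lemma stup_eqs:
  assumes "wf (Rel i k P t S)"
  shows "s_eqs i k P t S (stup i k P t S :: nat list \<Rightarrow> nat \<Rightarrow> 'o::wellorder)
     \<and> (\<forall>u. u \<notin> S \<longrightarrow> (stup i k P t S u :: nat \<Rightarrow> 'o) = (\<lambda>_. ozero))"
  unfolding stup_def by (rule theI'[OF stup_exists_unique[OF assms]])

lemma stup_unique:
  assumes "wf (Rel i k P t S)" "s_eqs i k P t S f" "\<forall>u. u \<notin> S \<longrightarrow> f u = (\<lambda>_. ozero)"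
  shows "stup i k P t S = (f :: nat list \<Rightarrow> nat \<Rightarrow> 'o::wellorder)"
  unfolding stup_def using the1_equality[OF stup_exists_unique[OF assms(1)], of f] assms(2,3) by blast




lemma act_D: "u \<in> act i k P t S \<Longrightarrow> u \<in> S \<and> (\<exists>j. t u = Some (Pr j) \<and> losing i k P j
      \<and> (\<forall>w. strict_prefix w u \<longrightarrow> t w \<noteq> Some Sw \<and> (\<forall>j'. t w = Some (Pr j') \<longrightarrow> \<not> j' < j)))"
  unfolding act_def by blast

lemma node_prefix: "n \<le> m \<Longrightarrow> prefix (node \<pi> n) (node \<pi> m)"
proof -
  assume "n \<le> m"
  then have "[0..<m] = [0..<n] @ [n..<m]" using upt_add_eq_append[of 0 n "m - n"] by simp
  then show ?thesis unfolding node_def prefix_def by auto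
qed

lemma node_sprefix: "n < m \<Longrightarrow> strict_prefix (node \<pi> n) (node \<pi> m)"
proof -
  assume "n < m"
  then have "prefix (node \<pi> n) (node \<pi> m)" using node_prefix by simp
  moreover have "node \<pi> n \<noteq> node \<pi> m" using \<open>n < m\<close> unfolding node_def
    by (metis diff_zero length_map length_upt order_less_irrefl)
  ultimately show ?thesis by (simp add: strict_prefix_def)
qed

lemma win_noinf:
  assumes win: "winning_strategy k t P S"
  shows "noinf i k P t S"
  unfolding noinf_def
proof (intro allI notI)
  fix \<pi> assume inf: "\<forall>N. \<exists>n\<ge>N. node \<pi> n \<in> act i k P t S"
  have strat: "strategy t P S" using win unfolding winning_strategy_def by blast
  have pc: "\<forall>u v. u @ v \<in> S \<longrightarrow> u \<in> S" using strat unfolding strategy_def by blast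
  have inS: "node \<pi> n \<in> S" for n
  proof -
    obtain m where m: "m \<ge> n" "node \<pi> m \<in> act i k P t S" using inf by blast
    then have "node \<pi> m \<in> S" using act_D by blast
    moreover obtain zs where "node \<pi> m = node \<pi> n @ zs" using node_prefix[OF m(1)] unfolding prefix_def by blast
    ultimately show ?thesis using pc by metis
  qed
  then have wins: "wins k t P \<pi>" using win unfolding winning_strategy_def by blast
  have later: "\<exists>m>n. node \<pi> m \<in> act i k P t S" for n
    using inf[rule_format, of "Suc n"] by (metis Suc_le_eq)
  have noSw: "t w \<noteq> Some Sw" if sp: "strict_prefix w (node \<pi> n)" for w n
  proof -
    obtain m where m: "m > n" "node \<pi> m \<in> act i k P t S" using later by blast
    have "strict_prefix w (node \<pi> m)" using sp node_sprefix[OF m(1)] prefix_order.less_trans by blast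
    then show ?thesis using act_D[OF m(2)] by blast
  qed
  have notsw: "\<not> switched t (node \<pi> n)" for n
  proof -
    have e: "{w. strict_prefix w (node \<pi> n) \<and> t w = Some Sw} = {}" using noSw by blast
    show ?thesis unfolding switched_def e by simp
  qed
  define J where "J = {j. \<exists>n. node \<pi> n \<in> act i k P t S \<and> t (node \<pi> n) = Some (Pr j)}"
  obtain n1 where n1: "node \<pi> n1 \<in> act i k P t S" using inf by blast
  then obtain j1 where "t (node \<pi> n1) = Some (Pr j1)" using act_D by blast
  then have "j1 \<in> J" using n1 J_def by blast
  define j0 where "j0 = (LEAST j. j \<in> J)"
  have "j0 \<in> J" using \<open>j1 \<in> J\<close> unfolding j0_def by (rule LeastI)
  then obtain n0 where n0: "node \<pi> n0 \<in> act i k P t S" "t (node \<pi> n0) = Some (Pr j0)" using J_def by blast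
  have lab: "t (node \<pi> m) = Some (Pr j0)" if th: "m > n0" "node \<pi> m \<in> act i k P t S" for m
  proof -
    obtain jm where jm: "t (node \<pi> m) = Some (Pr jm)"
      "\<forall>w. strict_prefix w (node \<pi> m) \<longrightarrow> t w \<noteq> Some Sw \<and> (\<forall>j'. t w = Some (Pr j') \<longrightarrow> \<not> j' < jm)"
      using act_D[OF th(2)] by blast
    have "jm \<in> J" using jm th J_def by blast
    then have "j0 \<le> jm" unfolding j0_def by (rule Least_le)
    moreover have "\<not> j0 < jm" using jm(2) node_sprefix[OF th(1)] n0(2) by blast
    ultimately show ?thesis using jm by simp
  qed
  have il: "inf_label t \<pi> j0"
    unfolding inf_label_def infinite_nat_iff_unbounded_le
  proof
    fix m
    obtain n where n: "n \<ge> max m (Suc n0)" "node \<pi> n \<in> act i k P t S" using inf by blast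
    then have "t (node \<pi> n) = Some (Pr j0)" using lab by simp
    then show "\<exists>n\<ge>m. n \<in> {n. t (node \<pi> n) = Some (Pr j0)}" using n by auto
  qed
  have nosmall: "\<not> inf_label t \<pi> j'" if jl: "j' < j0" for j'
  proof -
    have "t (node \<pi> n) \<noteq> Some (Pr j')" for n
    proof
      assume a: "t (node \<pi> n) = Some (Pr j')"
      obtain m where m: "m \<ge> Suc (max n n0)" "node \<pi> m \<in> act i k P t S" using inf by blast
      then have "t (node \<pi> m) = Some (Pr j0)" using lab by simp
      moreover have "strict_prefix (node \<pi> n) (node \<pi> m)" using m node_sprefix by simp
      ultimately show False using act_D[OF m(2)] a jl by auto
    qed
    then show ?thesis unfolding inf_label_def by simp
  qed
  have jm: "jmin k t \<pi> = j0"
  proof -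
    have "(LEAST j. inf_label t \<pi> j) = j0"
      by (rule Least_equality) (use il nosmall in \<open>auto simp: not_less[symmetric]\<close>)
    then show ?thesis unfolding jmin_def using il by auto
  qed
  have los: "losing i k P j0" using act_D[OF n0(1)] n0(2) by auto
  have "won1 k t \<pi> \<longleftrightarrow> even j0" unfolding won1_def jm using notsw by auto
  then show False using wins los unfolding wins_def losing_def by (cases P) auto
qed

context
  fixes i k :: nat and P :: player and t :: tree and S :: "nat list set"
  assumes tree: "is_tree i k t" and win: "winning_strategy k t P S"
begin

lemma strat: "strategy t P S" using win unfolding winning_strategy_def by blast

lemma wfR: "wf (Rel i k P t S)" using wf_Rel[OF win_noinf[OF win]] .

lemma child0: assumes "u \<in> S" "t u = Some (Pr j2)" shows "u @ [0] \<in> S"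
proof -
  have "\<not> controlled t P u" using assms(2) unfolding controlled_def by (cases P) auto
  then have "\<forall>n. t (u @ [n]) \<noteq> None \<longrightarrow> u @ [n] \<in> S" using strat assms(1) unfolding strategy_def by blast
  moreover have "t (u @ [0]) \<noteq> None" using tree assms(2) unfolding is_tree_def by force
  ultimately show ?thesis by blast
qed

lemma below_unary:
  assumes "t u = Some (Pr j2)" "w \<in> S" "prefix u w" "w \<noteq> u"
  shows "prefix (u @ [0]) w"
proof -
  obtain zs where zs: "w = u @ zs" using assms(3) unfolding prefix_def by blast
  then obtain n r where nr: "zs = n # r" using assms(4) by (cases zs) auto
  have "t w \<noteq> None" using strat assms(2) unfolding strategy_def by blast
  then have "t ((u @ [n]) @ r) \<noteq> None" using zs nr by simp
  then have "t (u @ [n]) \<noteq> None" using tree unfolding is_tree_def by blast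
  then have "n < 1" using tree assms(1) unfolding is_tree_def by force
  then show ?thesis using zs nr by simp
qed

lemma act_at_le:
  assumes "u \<in> act i k P t S" "t u = Some (Pr j2)" "j2 \<le> j"
  shows "act_at i k P t S u j = insert u (act_at i k P t S (u @ [0]) j)"
proof
  show "act_at i k P t S u j \<subseteq> insert u (act_at i k P t S (u @ [0]) j)"
  proof
    fix w assume w: "w \<in> act_at i k P t S u j"
    show "w \<in> insert u (act_at i k P t S (u @ [0]) j)"
    proof (cases "w = u")
      case False
      have "w \<in> S" using w act_D unfolding act_at_def by blast
      then have "prefix (u @ [0]) w" using below_unary[OF assms(2)] w False unfolding act_at_def by blast
      then show ?thesis using w unfolding act_at_def by blast
    qed simp
  qed
next
  show "insert u (act_at i k P t S (u @ [0]) j) \<subseteq> act_at i k P t S u j"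
    using assms unfolding act_at_def by (auto dest: append_prefixD)
qed

lemma act_at_gt:
  assumes "u \<in> act i k P t S" "t u = Some (Pr j2)" "j < j2"
  shows "act_at i k P t S u j = act_at i k P t S (u @ [0]) j"
proof
  show "act_at i k P t S u j \<subseteq> act_at i k P t S (u @ [0]) j"
  proof
    fix w assume w: "w \<in> act_at i k P t S u j"
    have "w \<noteq> u" using w assms unfolding act_at_def by auto
    moreover have "w \<in> S" using w act_D unfolding act_at_def by blast
    ultimately have "prefix (u @ [0]) w" using below_unary[OF assms(2)] w unfolding act_at_def by blast
    then show "w \<in> act_at i k P t S (u @ [0]) j" using w unfolding act_at_def by blast
  qed
next
  show "act_at i k P t S (u @ [0]) j \<subseteq> act_at i k P t S u j"
    unfolding act_at_def by (auto dest: append_prefixD)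
qed

end

lemma act_at_nonact:
  assumes "u \<notin> act i k P t S"
  shows "act_at i k P t S u j = (\<Union>w\<in>succs i k P t S u. act_at i k P t S w j)"
proof
  show "(\<Union>w\<in>succs i k P t S u. act_at i k P t S w j) \<subseteq> act_at i k P t S u j"
    unfolding act_at_def succs_def by (auto intro: prefix_order.trans)
next
  show "act_at i k P t S u j \<subseteq> (\<Union>w\<in>succs i k P t S u. act_at i k P t S w j)"
  proof
    fix e assume e: "e \<in> act_at i k P t S u j"
    define M where "M = {w'\<in>act i k P t S. prefix u w' \<and> prefix w' e}"
    have "e \<in> M" using e unfolding M_def act_at_def by auto
    define n where "n = (LEAST n. \<exists>w'\<in>M. length w' = n)"
    have "\<exists>w'\<in>M. length w' = n" unfolding n_def by (rule LeastI[of _ "length e"]) (use \<open>e \<in> M\<close> in blast)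
    then obtain w0 where w0: "w0 \<in> M" "length w0 = n" by blast
    have "w0 \<in> succs i k P t S u"
      unfolding succs_def
    proof (intro CollectI conjI notI)
      show "w0 \<in> act i k P t S" "prefix u w0" using w0 M_def by auto
    next
      assume "\<exists>w'\<in>act i k P t S. prefix u w' \<and> strict_prefix w' w0"
      then obtain w' where w': "w' \<in> act i k P t S" "prefix u w'" "strict_prefix w' w0" by blast
      have "prefix w' e" using w' w0 M_def by (auto intro: prefix_order.trans)
      then have "w' \<in> M" using w' M_def by blast
      then have "n \<le> length w'" unfolding n_def by (auto intro: Least_le)
      moreover have "length w' < length w0" using w'(3) prefix_length_less by blast
      ultimately show False using w0 by simp
    qed
    moreover have "e \<in> act_at i k P t S w0 j" using e w0 M_def unfolding act_at_def by auto
    ultimately show "e \<in> (\<Union>w\<in>succs i k P t S u. act_at i k P t S w j)" by blast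
  qed
qed




lemma finite_Lset: "finite (Lset i k P)"
  unfolding Lset_def losing_def by (rule finite_subset[of _ "{..k}"]) auto

lemma cnt: "countable (B :: nat list set)"
  by (rule countable_subset[OF subset_UNIV]) simp

context
  fixes i k :: nat and P :: player and t :: tree and S :: "nat list set"
  assumes tree: "is_tree i k t" and win: "winning_strategy k t P S"
begin

lemma stup_supp:
  assumes ords: "countably_bounded TYPE('o::wellorder)"
  shows "supported (Lset i k P) (stup i k P t S u :: nat \<Rightarrow> 'o)"
proof (induction u rule: wf_induct_rule[OF wfR[OF tree win]])
  case (1 u)
  have E: "s_eqs i k P t S (stup i k P t S :: nat list \<Rightarrow> nat \<Rightarrow> 'o)"
    "\<forall>u. u \<notin> S \<longrightarrow> (stup i k P t S u :: nat \<Rightarrow> 'o) = (\<lambda>_. ozero)"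
    using stup_eqs[OF wfR[OF tree win]] by blast+
  show ?case
  proof (cases "u \<in> S")
    case False then show ?thesis using E(2) unfolding supported_def by simp
  next
    case uS: True
    show ?thesis
    proof (cases "u \<in> act i k P t S")
      case True
      then obtain j2 where j2: "t u = Some (Pr j2)" "losing i k P j2" using act_D by blast
      have "(u @ [0], u) \<in> Rel i k P t S" using True by (simp add: Rel_def)
      then have "supported (Lset i k P) (stup i k P t S (u @ [0]) :: nat \<Rightarrow> 'o)" using 1 by blast
      moreover have "(stup i k P t S u :: nat \<Rightarrow> 'o) = bump j2 (stup i k P t S (u @ [0]))"
        using E(1) uS True j2 unfolding s_eqs_def by blast
      moreover have j2L: "j2 \<in> Lset i k P" using j2 by (simp add: Lset_def)
      ultimately show ?thesis using supported_bump[OF _ j2L] by simp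
    next
      case False
      have eq: "(stup i k P t S u :: nat \<Rightarrow> 'o) = lex_sup (Lset i k P) (stup i k P t S ` succs i k P t S u)"
        using E(1) uS False unfolding s_eqs_def by blast
      obtain y :: "nat \<Rightarrow> 'o" where y: "is_lub (Lset i k P) (stup i k P t S ` succs i k P t S u) y"
        using lub_exists[OF ords finite_Lset countable_image[OF cnt]] by blast
      then have "lex_sup (Lset i k P) (stup i k P t S ` succs i k P t S u) = y" by (rule lex_sup_eq)
      then have "(stup i k P t S u :: nat \<Rightarrow> 'o) = y" using eq by simp
      then show ?thesis using y unfolding is_lub_def by simp
    qed
  qed
qed

lemma main_lub:
  assumes ords: "countably_bounded TYPE('o::wellorder)" and jl: "losing i k P j"
  shows "u \<in> S \<Longrightarrow> is_lub (Lset i k P \<inter> {..j})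
     ((\<lambda>w. restr j (stup i k P t S w :: nat \<Rightarrow> 'o)) ` act_at i k P t S u j)
     (restr j (stup i k P t S u :: nat \<Rightarrow> 'o))"
proof (induction u rule: wf_induct_rule[OF wfR[OF tree win]])
  case (1 u)
  define s where "s = (stup i k P t S :: nat list \<Rightarrow> nat \<Rightarrow> 'o)"
  define g where "g = (\<lambda>w. restr j (s w))"
  define L where "L = Lset i k P"
  define Lj where "Lj = L \<inter> {..j}"
  have E: "s_eqs i k P t S s" using stup_eqs[OF wfR[OF tree win]] s_def by blast
  have sup: "supported L (s w)" for w using stup_supp[OF ords] s_def L_def by blast
  have gsup: "supported Lj (g w)" for w using supported_restr[OF sup] g_def Lj_def by blast
  have gag: "\<forall>m\<in>Lj. g w m = s w m" for w using restr_agree g_def Lj_def by blast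
  have IH: "(v, u) \<in> Rel i k P t S \<Longrightarrow> v \<in> S \<Longrightarrow> is_lub Lj (g ` act_at i k P t S v j) (g v)" for v
    using 1 unfolding g_def s_def Lj_def L_def by blast
  have "is_lub Lj (g ` act_at i k P t S u j) (g u)"
  proof (cases "u \<in> act i k P t S")
    case True
    then obtain j2 where j2: "t u = Some (Pr j2)" "losing i k P j2" using act_D by blast
    have u0S: "u @ [0] \<in> S" using child0[OF tree win \<open>u \<in> S\<close> j2(1)] .
    have "(u @ [0], u) \<in> Rel i k P t S" using True by (simp add: Rel_def)
    then have IH0: "is_lub Lj (g ` act_at i k P t S (u @ [0]) j) (g (u @ [0]))" using IH u0S by blast
    have su: "s u = bump j2 (s (u @ [0]))" using E \<open>u \<in> S\<close> True j2 unfolding s_eqs_def by blast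
    show ?thesis
    proof (cases "j2 \<le> j")
      case True
      have AA: "act_at i k P t S u j = insert u (act_at i k P t S (u @ [0]) j)"
        using act_at_le[OF tree win \<open>u \<in> act i k P t S\<close> j2(1) True] .
      have j2L: "j2 \<in> Lj" using j2 True unfolding Lj_def L_def Lset_def by simp
      have "lexle Lj (s (u @ [0])) (s u)" using lexle_bump[OF ords j2L] su by simp
      then have step: "lexle Lj (g (u @ [0])) (g u)" using lexle_cong[OF gag gag] by blast
      show ?thesis unfolding is_lub_def AA
      proof (intro conjI ballI allI impI)
        show "supported Lj (g u)" by (rule gsup)
      next
        fix x assume "x \<in> g ` insert u (act_at i k P t S (u @ [0]) j)"
        then show "lexle Lj x (g u)"
        proof
          fix e assume e: "e \<in> insert u (act_at i k P t S (u @ [0]) j)" "x = g e"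
          show "lexle Lj x (g u)"
          proof (cases "e = u")
            case True then show ?thesis using e lexle_refl by simp
          next
            case False
            then have "lexle Lj (g e) (g (u @ [0]))" using e IH0 unfolding is_lub_def by blast
            then show ?thesis using step lexle_trans e by blast
          qed
        qed
      next
        fix z assume "supported Lj z" "\<forall>x\<in>g ` insert u (act_at i k P t S (u @ [0]) j). lexle Lj x z"
        then show "lexle Lj (g u) z" by blast
      qed
    next
      case False
      then have AA: "act_at i k P t S u j = act_at i k P t S (u @ [0]) j"
        using act_at_gt[OF tree win \<open>u \<in> act i k P t S\<close> j2(1)] by simp
      have "j < j2" using False by simp
      then have "g u = g (u @ [0])" using su restr_bump_gt[of j j2] unfolding g_def by simp
      then show ?thesis using IH0 AA by simp
    qed
  next
    case False
    have su: "s u = lex_sup L (s ` succs i k P t S u)" using E \<open>u \<in> S\<close> False unfolding s_eqs_def L_def by blast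
    obtain y where y: "is_lub L (s ` succs i k P t S u) y"
      using lub_exists[OF ords finite_Lset countable_image[OF cnt]] unfolding L_def by blast
    then have "lex_sup L (s ` succs i k P t S u) = y" by (rule lex_sup_eq)
    then have H1: "is_lub L (s ` succs i k P t S u) (s u)" using su y by simp
    have H2: "is_lub Lj (s ` succs i k P t S u) (g u)"
      using lub_restr[OF ords _ countable_image[OF cnt] H1] finite_Lset unfolding g_def Lj_def L_def by blast
    have IHs: "is_lub Lj (g ` act_at i k P t S w j) (g w)" if "w \<in> succs i k P t S u" for w
    proof -
      have "(w, u) \<in> Rel i k P t S" using False that by (simp add: Rel_def)
      moreover have "w \<in> S" using that succs_act act_D by blast
      ultimately show ?thesis using IH by blast
    qed
    have AA: "act_at i k P t S u j = (\<Union>w\<in>succs i k P t S u. act_at i k P t S w j)"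
      using act_at_nonact[OF False] .
    show ?thesis unfolding is_lub_def
    proof (intro conjI ballI allI impI)
      show "supported Lj (g u)" by (rule gsup)
    next
      fix x assume "x \<in> g ` act_at i k P t S u j"
      then obtain w e where we: "w \<in> succs i k P t S u" "e \<in> act_at i k P t S w j" "x = g e"
        using AA by blast
      have "lexle Lj (g e) (g w)" using IHs[OF we(1)] we(2) unfolding is_lub_def by blast
      moreover have "lexle Lj (s w) (g u)" using H2 we(1) unfolding is_lub_def by blast
      then have "lexle Lj (g w) (g u)" using lexle_cong[OF gag[of w], of "g u" "g u"] by simp
      ultimately show "lexle Lj x (g u)" using we(3) lexle_trans by blast
    next
      fix z assume zs: "supported Lj z" and zub: "\<forall>x\<in>g ` act_at i k P t S u j. lexle Lj x z"
      have "\<forall>x\<in>s ` succs i k P t S u. lexle Lj x z"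
      proof
        fix x assume "x \<in> s ` succs i k P t S u"
        then obtain w where w: "w \<in> succs i k P t S u" "x = s w" by blast
        have "\<forall>x\<in>g ` act_at i k P t S w j. lexle Lj x z" using zub AA w(1) by blast
        then have "lexle Lj (g w) z" using IHs[OF w(1)] zs unfolding is_lub_def by blast
        then show "lexle Lj x z" using lexle_cong[OF gag[of w], of z z] w(2) by simp
      qed
      then show "lexle Lj (g u) z" using H2 zs unfolding is_lub_def by blast
    qed
  qed
  then show ?case unfolding g_def s_def Lj_def L_def by blast
qed

end




lemma sprefix_append_cases:
  "strict_prefix z (w @ x) \<longleftrightarrow> strict_prefix z w \<or> (\<exists>y. z = w @ y \<and> strict_prefix y x)"
proof
  assume a: "strict_prefix z (w @ x)"
  then have "prefix z (w @ x)" "z \<noteq> w @ x" by (auto simp: strict_prefix_def)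
  then have "prefix z w \<or> (\<exists>us. z = w @ us \<and> prefix us x)" using prefix_append by blast
  then show "strict_prefix z w \<or> (\<exists>y. z = w @ y \<and> strict_prefix y x)"
  proof
    assume "prefix z w"
    show ?thesis
    proof (cases "z = w")
      case True
      then have "x \<noteq> []" using \<open>z \<noteq> w @ x\<close> by simp
      then have "strict_prefix [] x" by (simp add: strict_prefix_def)
      then show ?thesis using True by auto
    next
      case False then show ?thesis using \<open>prefix z w\<close> by (simp add: strict_prefix_def)
    qed
  next
    assume "\<exists>us. z = w @ us \<and> prefix us x"
    then obtain us where "z = w @ us" "prefix us x" by blast
    then show ?thesis using \<open>z \<noteq> w @ x\<close> by (auto simp: strict_prefix_def)
  qed
next
  assume "strict_prefix z w \<or> (\<exists>y. z = w @ y \<and> strict_prefix y x)"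
  then show "strict_prefix z (w @ x)"
  proof
    assume "strict_prefix z w"
    then show ?thesis by (metis prefix_order.less_le_trans prefix_prefix prefix_order.refl)
  next
    assume "\<exists>y. z = w @ y \<and> strict_prefix y x"
    then show ?thesis by (auto simp: strict_prefix_def)
  qed
qed

lemma act_sub:
  assumes wa: "w \<in> act i k P t S"
  shows "x \<in> act i k P (subtree t w) (substrat S w) \<longleftrightarrow> w @ x \<in> act i k P t S"
proof
  assume a: "w @ x \<in> act i k P t S"
  then obtain j3 where j3: "w @ x \<in> S" "t (w @ x) = Some (Pr j3)" "losing i k P j3"
    "\<forall>z. strict_prefix z (w @ x) \<longrightarrow> t z \<noteq> Some Sw \<and> (\<forall>j'. t z = Some (Pr j') \<longrightarrow> \<not> j' < j3)"
    using act_D by blast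
  have "\<forall>y. strict_prefix y x \<longrightarrow> t (w @ y) \<noteq> Some Sw \<and> (\<forall>j'. t (w @ y) = Some (Pr j') \<longrightarrow> \<not> j' < j3)"
    using j3(4) sprefix_append_cases by blast
  then show "x \<in> act i k P (subtree t w) (substrat S w)"
    unfolding act_def subtree_def substrat_def using j3 by auto
next
  assume a: "x \<in> act i k P (subtree t w) (substrat S w)"
  then obtain j3 where j3: "w @ x \<in> S" "t (w @ x) = Some (Pr j3)" "losing i k P j3"
    "\<forall>y. strict_prefix y x \<longrightarrow> t (w @ y) \<noteq> Some Sw \<and> (\<forall>j'. t (w @ y) = Some (Pr j') \<longrightarrow> \<not> j' < j3)"
    unfolding act_def subtree_def substrat_def by auto
  obtain j2 where j2: "t w = Some (Pr j2)"
    "\<forall>z. strict_prefix z w \<longrightarrow> t z \<noteq> Some Sw \<and> (\<forall>j'. t z = Some (Pr j') \<longrightarrow> \<not> j' < j2)"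
    using act_D[OF wa] by blast
  have j32: "j3 \<le> j2"
  proof (cases "x = []")
    case True then show ?thesis using j2 j3 by simp
  next
    case False
    then have "strict_prefix [] x" by (simp add: strict_prefix_def)
    then show ?thesis using j3(4) j2(1) by fastforce
  qed
  have "\<forall>z. strict_prefix z (w @ x) \<longrightarrow> t z \<noteq> Some Sw \<and> (\<forall>j'. t z = Some (Pr j') \<longrightarrow> \<not> j' < j3)"
  proof (intro allI impI)
    fix z assume "strict_prefix z (w @ x)"
    then have "strict_prefix z w \<or> (\<exists>y. z = w @ y \<and> strict_prefix y x)" using sprefix_append_cases by blast
    then show "t z \<noteq> Some Sw \<and> (\<forall>j'. t z = Some (Pr j') \<longrightarrow> \<not> j' < j3)"
    proof
      assume "strict_prefix z w"
      then show ?thesis using j2(2) j32 by fastforce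
    next
      assume "\<exists>y. z = w @ y \<and> strict_prefix y x"
      then show ?thesis using j3(4) by blast
    qed
  qed
  then show "w @ x \<in> act i k P t S" unfolding act_def using j3 by blast
qed

lemma succs_sub:
  assumes wa: "w \<in> act i k P t S"
  shows "succs i k P (subtree t w) (substrat S w) x = {y. w @ y \<in> succs i k P t S (w @ x)}"
proof -
  have pe: "prefix (w @ x) z \<longleftrightarrow> (\<exists>y'. z = w @ y' \<and> prefix x y')" for z
    by (auto simp: prefix_def)
  have spe: "strict_prefix (w @ a) (w @ b) \<longleftrightarrow> strict_prefix a b" for a b :: "nat list"
    by (simp add: strict_prefix_def)
  show ?thesis
    unfolding succs_def act_sub[OF wa, symmetric]
  proof (intro set_eqI iffI CollectI conjI; elim CollectE conjE)
    fix y
    assume a: "y \<in> act i k P (subtree t w) (substrat S w)" "prefix x y"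
      "\<not> (\<exists>w'\<in>act i k P (subtree t w) (substrat S w). prefix x w' \<and> strict_prefix w' y)"
    show "w @ y \<in> act i k P t S" using a act_sub[OF wa] by blast
    show "prefix (w @ x) (w @ y)" using a by simp
    show "\<not> (\<exists>w'\<in>act i k P t S. prefix (w @ x) w' \<and> strict_prefix w' (w @ y))"
    proof
      assume "\<exists>w'\<in>act i k P t S. prefix (w @ x) w' \<and> strict_prefix w' (w @ y)"
      then obtain w' where w': "w' \<in> act i k P t S" "prefix (w @ x) w'" "strict_prefix w' (w @ y)" by blast
      then obtain y' where y': "w' = w @ y'" "prefix x y'" using pe by blast
      then have "y' \<in> act i k P (subtree t w) (substrat S w)" using w' act_sub[OF wa] by blast
      moreover have "strict_prefix y' y" using w'(3) y' spe by simp
      ultimately show False using a y' by blast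
    qed
  next
    fix y
    assume a: "w @ y \<in> act i k P t S" "prefix (w @ x) (w @ y)"
      "\<not> (\<exists>w'\<in>act i k P t S. prefix (w @ x) w' \<and> strict_prefix w' (w @ y))"
    show "y \<in> act i k P (subtree t w) (substrat S w)" using a act_sub[OF wa] by blast
    show "prefix x y" using a by simp
    show "\<not> (\<exists>w'\<in>act i k P (subtree t w) (substrat S w). prefix x w' \<and> strict_prefix w' y)"
    proof
      assume "\<exists>w'\<in>act i k P (subtree t w) (substrat S w). prefix x w' \<and> strict_prefix w' y"
      then obtain y' where y': "y' \<in> act i k P (subtree t w) (substrat S w)" "prefix x y'" "strict_prefix y' y" by blast
      then have "w @ y' \<in> act i k P t S" using act_sub[OF wa] by blast
      moreover have "prefix (w @ x) (w @ y')" using y' by simp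
      moreover have "strict_prefix (w @ y') (w @ y)" using y' spe by simp
      ultimately show False using a by blast
    qed
  qed
qed

lemma succs_img:
  assumes wa: "w \<in> act i k P t S"
  shows "(\<lambda>y. w @ y) ` succs i k P (subtree t w) (substrat S w) x = succs i k P t S (w @ x)"
proof
  show "(\<lambda>y. w @ y) ` succs i k P (subtree t w) (substrat S w) x \<subseteq> succs i k P t S (w @ x)"
    using succs_sub[OF wa] by auto
next
  show "succs i k P t S (w @ x) \<subseteq> (\<lambda>y. w @ y) ` succs i k P (subtree t w) (substrat S w) x"
  proof
    fix e assume e: "e \<in> succs i k P t S (w @ x)"
    then have "prefix (w @ x) e" using succs_act by blast
    then obtain r where "e = w @ (x @ r)" unfolding prefix_def by auto
    then show "e \<in> (\<lambda>y. w @ y) ` succs i k P (subtree t w) (substrat S w) x"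
      using e succs_sub[OF wa] by auto
  qed
qed

lemma noinf_sub:
  assumes wa: "w \<in> act i k P t S" and ni: "noinf i k P t S"
  shows "noinf i k P (subtree t w) (substrat S w)"
  unfolding noinf_def
proof (intro allI notI)
  fix \<pi>' assume inf: "\<forall>N. \<exists>n\<ge>N. node \<pi>' n \<in> act i k P (subtree t w) (substrat S w)"
  define \<pi> where "\<pi> n = (if n < length w then w ! n else \<pi>' (n - length w))" for n
  have nd: "node \<pi> (length w + n) = w @ node \<pi>' n" for n
    unfolding node_def by (rule nth_equalityI) (auto simp: nth_append \<pi>_def)
  have "\<forall>N. \<exists>n\<ge>N. node \<pi> n \<in> act i k P t S"
  proof
    fix N
    obtain n where n: "n \<ge> N" "node \<pi>' n \<in> act i k P (subtree t w) (substrat S w)" using inf by blast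
    then have "node \<pi> (length w + n) \<in> act i k P t S" using nd act_sub[OF wa] by simp
    then show "\<exists>n\<ge>N. node \<pi> n \<in> act i k P t S" using n(1) by (intro exI[of _ "length w + n"]) simp
  qed
  then show False using ni unfolding noinf_def by blast
qed

lemma stup_sub:
  assumes win: "winning_strategy k t P S" and wa: "w \<in> act i k P t S"
  shows "(stup i k P (subtree t w) (substrat S w) :: nat list \<Rightarrow> nat \<Rightarrow> 'o::wellorder)
      = (\<lambda>x. stup i k P t S (w @ x))"
proof -
  have ni: "noinf i k P t S" using win_noinf[OF win] .
  have wfR: "wf (Rel i k P t S)" using wf_Rel[OF ni] .
  have wfR': "wf (Rel i k P (subtree t w) (substrat S w))" using wf_Rel[OF noinf_sub[OF wa ni]] .
  have E: "s_eqs i k P t S (stup i k P t S :: nat list \<Rightarrow> nat \<Rightarrow> 'o)"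
    "\<forall>u. u \<notin> S \<longrightarrow> (stup i k P t S u :: nat \<Rightarrow> 'o) = (\<lambda>_. ozero)"
    using stup_eqs[OF wfR] by blast+
  show ?thesis
  proof (rule stup_unique[OF wfR'])
    show "\<forall>u. u \<notin> substrat S w \<longrightarrow> (stup i k P t S (w @ u) :: nat \<Rightarrow> 'o) = (\<lambda>_. ozero)"
      using E(2) unfolding substrat_def by simp
    show "s_eqs i k P (subtree t w) (substrat S w) (\<lambda>x. stup i k P t S (w @ x) :: nat \<Rightarrow> 'o)"
      unfolding s_eqs_def
    proof (intro ballI conjI impI allI)
      fix x j assume x: "x \<in> substrat S w" "x \<in> act i k P (subtree t w) (substrat S w)"
        "subtree t w x = Some (Pr j)"
      then have "w @ x \<in> S" "w @ x \<in> act i k P t S" "t (w @ x) = Some (Pr j)"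
        using act_sub[OF wa] unfolding substrat_def subtree_def by auto
      then show "(stup i k P t S (w @ x) :: nat \<Rightarrow> 'o) = bump j (stup i k P t S (w @ x @ [0]))"
        using E(1) unfolding s_eqs_def by auto
    next
      fix x assume x: "x \<in> substrat S w" "x \<notin> act i k P (subtree t w) (substrat S w)"
      then have xx: "w @ x \<in> S" "w @ x \<notin> act i k P t S"
        using act_sub[OF wa] unfolding substrat_def by auto
      have "(stup i k P t S (w @ x) :: nat \<Rightarrow> 'o) = lex_sup (Lset i k P) (stup i k P t S ` succs i k P t S (w @ x))"
        using E(1) xx unfolding s_eqs_def by blast
      also have "stup i k P t S ` succs i k P t S (w @ x)
          = (\<lambda>x. stup i k P t S (w @ x) :: nat \<Rightarrow> 'o) ` succs i k P (subtree t w) (substrat S w) x"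
        unfolding succs_img[OF wa, symmetric] image_image by simp
      finally show "(stup i k P t S (w @ x) :: nat \<Rightarrow> 'o) = lex_sup (Lset i k P)
          ((\<lambda>x. stup i k P t S (w @ x)) ` succs i k P (subtree t w) (substrat S w) x)" .
    qed
  qed
qed

theorem mainTheorem10:
  fixes i k j :: nat and P :: player and t :: tree and S :: "nat list set" and u :: "nat list"
  assumes ords: "countably_bounded TYPE('o::wellorder)"
    and ik: "i < k"
    and tree: "is_tree i k t"
    and wf: "well_formed t"
    and win: "winning_strategy k t P S"
    and uS: "u \<in> S"
    and jl: "losing i k P j"
  shows "restr j (stup i k P t S u :: nat \<Rightarrow> 'o)
           = lex_sup (Lset i k P \<inter> {..j})
               ((\<lambda>w. restr j (stup i k P t S w :: nat \<Rightarrow> 'o)) ` act_at i k P t S u j)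
       \<and> restr j (stup i k P t S u :: nat \<Rightarrow> 'o)
           = lex_sup (Lset i k P \<inter> {..j})
               ((\<lambda>w. restr j (stup i k P (subtree t w) (substrat S w) [] :: nat \<Rightarrow> 'o))
                  ` act_at i k P t S u j)"
proof -
  have A: "restr j (stup i k P t S u :: nat \<Rightarrow> 'o)
           = lex_sup (Lset i k P \<inter> {..j})
               ((\<lambda>w. restr j (stup i k P t S w :: nat \<Rightarrow> 'o)) ` act_at i k P t S u j)"
    using lex_sup_eq[OF main_lub[OF tree win ords jl uS]] by simp
  have B: "(\<lambda>w. restr j (stup i k P (subtree t w) (substrat S w) [] :: nat \<Rightarrow> 'o)) ` act_at i k P t S u j
      = (\<lambda>w. restr j (stup i k P t S w :: nat \<Rightarrow> 'o)) ` act_at i k P t S u j"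
  proof (rule image_cong[OF refl])
    fix w assume "w \<in> act_at i k P t S u j"
    then have wa: "w \<in> act i k P t S" unfolding act_at_def by blast
    have "(stup i k P (subtree t w) (substrat S w) [] :: nat \<Rightarrow> 'o) = stup i k P t S (w @ [])"
      using fun_cong[OF stup_sub[OF win wa], of "[]"] by simp
    then show "restr j (stup i k P (subtree t w) (substrat S w) [] :: nat \<Rightarrow> 'o) = restr j (stup i k P t S w)"
      by simp
  qed
  show ?thesis using A B by simp
qed


end
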